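(* Let $m=rn$ with $r\geq 2$ an integer, let $\underline{\theta},q>0$, let all utilities $u_i(j)$ ($i\in[n]$, $j\in[m]$) lie in $[0,1]$, let $\tau:=1-\left(\frac{64\log m}{\underline{\theta}n}\right)^{1/q}$ and $\tau':=3\tau-2$. Let $E_{\geq\tau}=\{(i,j): u_i(j)\geq\tau\}$, let $E^*_{\geq\tau}$ be the edge set produced by ThresholdMatchingWithRemoval$_\tau$ (see context), and for each agent $i$ let $M_{>\tau'}(i)=\{j\in M: u_i(j)>\tau'\}$. If $(i,j)\in E_{\geq\tau}\setminus E^*_{\geq\tau}$, then there exists an agent $i'$ such that $|M_{>\tau'}(i)\cap M_{>\tau'}(i')|>2r/3$ and $j\in M_{>\tau'}(i)\cap M_{>\tau'}(i')$.
   Context: Agents are $N=[n]$, items $M=[m]$. For a finite multiset $S$ of reals, sum-top$_r(S)$ is the sum of its $r$ largest elements (or of all elements if $|S|<r$). Procedure ThresholdMatchingWithRemoval$_\tau$: for each agent $i=1,\dots,n$, set $M^*_{\geq\tau}(i)\leftarrow\{j\in M: u_i(j)\geq\tau\}$; then for each $i'\in N\setminus\{i\}$ in turn, while sum-top$_r(\{u_{i'}(j): j\in M^*_{\geq\tau}(i)\})>r\tau$ (as a multiset), remove from $M^*_{\geq\tau}(i)$ the item(s) $j\in M^*_{\geq\tau}(i)$ maximizing $u_{i'}(j)$. Then $E^*_{\geq\tau}=\{(i,j): j\in M^*_{\geq\tau}(i)\text{ at the end}\}$. $\log$ is natural. *)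

theory Defs
  imports Complex_Main "HOL-Library.Multiset"
begin

definition sum_top :: "nat \<Rightarrow> real multiset \<Rightarrow> real" where
  "sum_top r S = sum_list (take r (rev (sorted_list_of_multiset S)))"

text \<open>Inner while-loop for a fixed other agent with utility v:
  while sum-top_r of the multiset {v j : j in S} exceeds r*tau, remove all
  items of S maximizing v.  (Stops when S is empty: nothing left to remove.)\<close>
function remove_loop :: "(nat \<Rightarrow> real) \<Rightarrow> nat \<Rightarrow> real \<Rightarrow> nat set \<Rightarrow> nat set" where
  "remove_loop v r \<tau> S =
     (if finite S \<and> S \<noteq> {} \<and> sum_top r (image_mset v (mset_set S)) > real r * \<tau>
      then remove_loop v r \<tau> (S - {j \<in> S. v j = Max (v ` S)})
      else S)"
  by auto
termination
proof (relation "measure (\<lambda>(v, r, \<tau>, S). card S)")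
  show "wf (measure (\<lambda>(v, r, \<tau>, S). card S))" by simp
next
  fix v :: "nat \<Rightarrow> real" and r \<tau> and S :: "nat set"
  assume h: "finite S \<and> S \<noteq> {} \<and> sum_top r (image_mset v (mset_set S)) > real r * \<tau>"
  then have "Max (v ` S) \<in> v ` S" by auto
  then obtain j where "j \<in> S" "v j = Max (v ` S)" by auto
  then have "card (S - {j \<in> S. v j = Max (v ` S)}) < card S"
    using h by (intro psubset_card_mono) auto
  then show "((v, r, \<tau>, S - {j \<in> S. v j = Max (v ` S)}), v, r, \<tau>, S)
             \<in> measure (\<lambda>(v, r, \<tau>, S). card S)" by simp
qed

declare remove_loop.simps [simp del]

text \<open>ThresholdMatchingWithRemoval_tau, agents N = {0..<n}, items M = {0..<m}:
  the final set M*_{>=tau}(i).  Other agents i' are processed in increasing order.\<close>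
definition threshold_set_removal ::
  "nat \<Rightarrow> nat \<Rightarrow> nat \<Rightarrow> real \<Rightarrow> (nat \<Rightarrow> nat \<Rightarrow> real) \<Rightarrow> nat \<Rightarrow> nat set" where
  "threshold_set_removal n m r \<tau> u i =
     foldl (\<lambda>S i'. remove_loop (u i') r \<tau> S)
           {j \<in> {0..<m}. u i j \<ge> \<tau>}
           (filter (\<lambda>i'. i' \<noteq> i) [0..<n])"

definition threshold_edges_removal ::
  "nat \<Rightarrow> nat \<Rightarrow> nat \<Rightarrow> real \<Rightarrow> (nat \<Rightarrow> nat \<Rightarrow> real) \<Rightarrow> (nat \<times> nat) set" where
  "threshold_edges_removal n m r \<tau> u =
     {(i, j). i \<in> {0..<n} \<and> j \<in> threshold_set_removal n m r \<tau> u i}"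

definition threshold_edges :: "nat \<Rightarrow> nat \<Rightarrow> real \<Rightarrow> (nat \<Rightarrow> nat \<Rightarrow> real) \<Rightarrow> (nat \<times> nat) set" where
  "threshold_edges n m \<tau> u = {(i, j). i \<in> {0..<n} \<and> j \<in> {0..<m} \<and> u i j \<ge> \<tau>}"

definition items_above :: "nat \<Rightarrow> real \<Rightarrow> (nat \<Rightarrow> nat \<Rightarrow> real) \<Rightarrow> nat \<Rightarrow> nat set" where
  "items_above m t u i = {j \<in> {0..<m}. u i j > t}"

end

theory Submission
  imports Defs
begin

lemma remove_loop_sub: "remove_loop v r t S \<subseteq> S"
proof (induction v r t S rule: remove_loop.induct)
  case (1 v r t S)
  then show ?case by (subst remove_loop.simps) auto
qed

lemma remove_loop_witness:
  "j \<in> S \<Longrightarrow> j \<notin> remove_loop v r t S \<Longrightarrow>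
   \<exists>S'\<subseteq>S. j \<in> S' \<and> finite S' \<and> sum_top r (image_mset v (mset_set S')) > real r * t
      \<and> v j = Max (v ` S')"
proof (induction v r t S rule: remove_loop.induct)
  case (1 v r t S)
  show ?case
  proof (cases "finite S \<and> S \<noteq> {} \<and> sum_top r (image_mset v (mset_set S)) > real r * t")
    case True
    show ?thesis
    proof (cases "v j = Max (v ` S)")
      case True
      then show ?thesis using \<open>finite S \<and> _\<close> 1(2) by blast
    next
      case False
      have "j \<notin> remove_loop v r t (S - {j \<in> S. v j = Max (v ` S)})"
        using 1(3) True \<open>finite S \<and> _\<close> by (subst (asm) remove_loop.simps) simp
      then obtain S' where "S' \<subseteq> S - {j \<in> S. v j = Max (v ` S)}" "j \<in> S' \<and> finite S' \<and> sum_top r (image_mset v (mset_set S')) > real r * t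
      \<and> v j = Max (v ` S')"
        using 1(1)[OF \<open>finite S \<and> _\<close>] 1(2) False by blast
      then show ?thesis by blast
    qed
  next
    case False
    have "remove_loop v r t S = S" using False by (simp only: remove_loop.simps[of v r t S] if_not_P if_False)
    then have "j \<notin> S" using 1(3) by metis
    then show ?thesis using 1(2) by blast
  qed
qed

lemma foldl_witness:
  "j \<in> S0 \<Longrightarrow> finite S0 \<Longrightarrow> j \<notin> foldl (\<lambda>S i'. remove_loop (u i') r t S) S0 xs \<Longrightarrow>
   \<exists>i'\<in>set xs. \<exists>S'\<subseteq>S0. j \<in> S' \<and> finite S' \<and> sum_top r (image_mset (u i') (mset_set S')) > real r * t
      \<and> u i' j = Max (u i' ` S')"
proof (induction xs arbitrary: S0)
  case Nil
  then show ?case by (simp only: foldl_Nil) blast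
next
  case (Cons a xs)
  show ?case
  proof (cases "j \<in> remove_loop (u a) r t S0")
    case True
    have fin: "finite (remove_loop (u a) r t S0)"
      by (rule finite_subset[OF remove_loop_sub Cons(3)])
    have nf: "j \<notin> foldl (\<lambda>S i'. remove_loop (u i') r t S) (remove_loop (u a) r t S0) xs"
      using Cons(4) by simp
    obtain i' S' where i': "i' \<in> set xs" and S': "S' \<subseteq> remove_loop (u a) r t S0" and P: "j \<in> S' \<and> finite S' \<and> sum_top r (image_mset (u i') (mset_set S')) > real r * t
      \<and> u i' j = Max (u i' ` S')" using Cons.IH[OF True fin nf] by blast
    have "S' \<subseteq> S0" using S' remove_loop_sub[of "u a" r t S0] by (rule subset_trans)
    moreover have "i' \<in> set (a # xs)" using i' by simp
    ultimately show ?thesis using P by blast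
  next
    case False
    have "a \<in> set (a # xs)" by simp
    then show ?thesis using remove_loop_witness[OF Cons(2) False] by blast
  qed
qed

lemma sum_list_bound:
  assumes "\<forall>x\<in>set T. x \<le> 1"
  shows "sum_list T \<le> real (length (filter (\<lambda>x. x > c) T)) + real (length T - length (filter (\<lambda>x. x > c) T)) * c"
  using assms
proof (induction T)
  case Nil
  then show ?case by simp
next
  case (Cons a T)
  have le: "length (filter (\<lambda>x. x > c) T) \<le> length T" by simp
  show ?case
  proof (cases "a > c")
    case True
    then show ?thesis using Cons le by (simp add: of_nat_diff algebra_simps)
  next
    case False
    then show ?thesis using Cons le by (simp add: Suc_diff_le algebra_simps)
  qed
qed

lemma length_filter_take_le: "length (filter P (take k xs)) \<le> length (filter P xs)"
  by (induction xs arbitrary: k) (auto split: nat.split simp: take_Cons' le_SucI)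

lemma count_bound:
  fixes v :: "nat \<Rightarrow> real" and t t' :: real
  assumes fin: "finite S" and le1: "\<forall>x\<in>S. v x \<le> 1" and t'0: "t' \<ge> 0" and t1: "t < 1"
    and t': "t' = 3 * t - 2"
    and st: "sum_top r (image_mset v (mset_set S)) > real r * t"
  shows "real (card {x\<in>S. v x > t'}) > 2 * real r / 3"
proof -
  define L where "L = rev (sorted_list_of_multiset (image_mset v (mset_set S)))"
  define T where "T = take r L"
  define c where "c = length (filter (\<lambda>x. x > t') T)"
  have setL: "set L = v ` S" unfolding L_def using fin by simp
  have "\<forall>x\<in>set T. x \<le> 1" 
  proof
    fix x assume "x \<in> set T"
    then have "x \<in> v ` S" using setL unfolding T_def by (metis in_set_takeD)
    then show "x \<le> 1" using le1 by auto
  qed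
  then have sb: "sum_list T \<le> real c + real (length T - c) * t'"
    unfolding c_def by (rule sum_list_bound)
  have lT: "length T \<le> r" unfolding T_def by simp
  have cT: "c \<le> length T" unfolding c_def by simp
  have "real (length T - c) * t' \<le> real (r - c) * t'"
    using lT cT t'0 by (intro mult_right_mono) auto
  with sb have "sum_list T \<le> real c + real (r - c) * t'" by linarith
  moreover have "sum_top r (image_mset v (mset_set S)) = sum_list T"
    unfolding sum_top_def T_def L_def by simp
  ultimately have "real r * t < real c + (real r - real c) * t'"
    using st cT lT by (simp add: of_nat_diff)
  then have "0 < (1 - t) * (3 * real c - 2 * real r)" using t'
    by (simp add: algebra_simps)
  then have "0 < 3 * real c - 2 * real r" using t1
    by (simp add: zero_less_mult_iff)
  then have c3: "2 * real r < 3 * real c" by simp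
  have "c \<le> card {x\<in>S. v x > t'}"
  proof -
    have "c \<le> length (filter (\<lambda>x. x > t') L)"
      unfolding c_def T_def by (rule length_filter_take_le)
    also have "length (filter (\<lambda>x. x > t') L) = size (filter_mset (\<lambda>x. x > t') (image_mset v (mset_set S)))"
      unfolding L_def by (simp only: size_mset[symmetric] mset_filter mset_rev mset_sorted_list_of_multiset)
    also have "\<dots> = card {x\<in>S. v x > t'}"
      using fin by (simp add: filter_mset_image_mset filter_mset_mset_set)
    finally show ?thesis .
  qed
  then have "real c \<le> real (card {x\<in>S. v x > t'})" by (rule of_nat_mono)
  then show ?thesis using c3 by linarith
qed



theorem proposition3:
  fixes n m r :: nat and \<theta> q \<tau> \<tau>' :: real and u :: "nat \<Rightarrow> nat \<Rightarrow> real" and i j :: nat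
  assumes "m = r * n" and "r \<ge> 2" and "\<theta> > 0" and "q > 0"
    and "\<forall>i\<in>{0..<n}. \<forall>j\<in>{0..<m}. 0 \<le> u i j \<and> u i j \<le> 1"
    and "\<tau> = 1 - (64 * ln (real m) / (\<theta> * real n)) powr (1 / q)"
    and "\<tau>' = 3 * \<tau> - 2"
    and "(i, j) \<in> threshold_edges n m \<tau> u - threshold_edges_removal n m r \<tau> u"
  shows "\<exists>i'\<in>{0..<n}. real (card (items_above m \<tau>' u i \<inter> items_above m \<tau>' u i')) > 2 * real r / 3
           \<and> j \<in> items_above m \<tau>' u i \<inter> items_above m \<tau>' u i'"
proof -
  have i: "i < n" and jm: "j < m" and uij: "u i j \<ge> \<tau>"
    and nj: "j \<notin> threshold_set_removal n m r \<tau> u i"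
    using assms(8) unfolding threshold_edges_def threshold_edges_removal_def by auto
  have n1: "1 \<le> n" using i by simp
  have "2 * 1 \<le> r * n" using assms(2) n1 by (rule mult_le_mono)
  then have m2: "m \<ge> 2" using assms(1) by simp
  have "64 * ln (real m) / (\<theta> * real n) > 0" using m2 i assms(3) by (intro divide_pos_pos) auto
  then have "(64 * ln (real m) / (\<theta> * real n)) powr (1 / q) > 0" by (rule powr_gt_zero[THEN iffD2, OF less_imp_neq[symmetric]])
  then have t1: "\<tau> < 1" using assms(6) by simp
  have tt': "\<tau>' < \<tau>" using t1 assms(7) by simp
  show ?thesis
  proof (cases "\<tau>' < 0")
    case True
    have all: "items_above m \<tau>' u i = {0..<m}"
    proof -
      have "\<tau>' < u i x" if "x < m" for x
      proof -
        have "0 \<le> u i x" using assms(5) i that by simp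
        then show ?thesis using True by linarith
      qed
      then show ?thesis unfolding items_above_def by auto
    qed
    have "r * 1 \<le> r * n" using n1 by (rule mult_le_mono2)
    then have "r \<le> m" using assms(1) by (simp only: mult_1_right)
    then have "real m \<ge> real r" by (rule of_nat_mono)
    then have "real (card {0..<m}) > 2 * real r / 3" using assms(2) by simp
    moreover have "items_above m \<tau>' u i \<inter> items_above m \<tau>' u i = {0..<m}" using all by simp
    moreover have "j \<in> {0..<m}" using jm by simp
    moreover have "i \<in> {0..<n}" using i by simp
    ultimately show ?thesis by metis
  next
    case False
    define S0 where "S0 = {j \<in> {0..<m}. u i j \<ge> \<tau>}"
    have jS0: "j \<in> S0" using jm uij S0_def by simp
    have fS0: "finite S0" unfolding S0_def by simp
    have nf: "j \<notin> foldl (\<lambda>S i'. remove_loop (u i') r \<tau> S) S0 (filter (\<lambda>i'. i' \<noteq> i) [0..<n])"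
      using nj unfolding threshold_set_removal_def S0_def by simp
    obtain i' S' where i': "i' \<in> set (filter (\<lambda>i'. i' \<noteq> i) [0..<n])" and S': "S' \<subseteq> S0"
      and jS: "j \<in> S'" and fS: "finite S'" and st: "sum_top r (image_mset (u i') (mset_set S')) > real r * \<tau>"
      and mx: "u i' j = Max (u i' ` S')"
      using foldl_witness[OF jS0 fS0 nf] by blast
    have i'n: "i' < n" using i' by simp
    have le1: "\<forall>x\<in>S'. u i' x \<le> 1" using S' assms(5) i'n unfolding S0_def by auto
    have cb: "real (card {x\<in>S'. u i' x > \<tau>'}) > 2 * real r / 3"
      using count_bound[OF fS le1 _ t1 assms(7) st] False by simp
    have sub: "{x\<in>S'. u i' x > \<tau>'} \<subseteq> items_above m \<tau>' u i \<inter> items_above m \<tau>' u i'"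
      using S' tt' unfolding S0_def items_above_def by fastforce
    have "card {x\<in>S'. u i' x > \<tau>'} \<le> card (items_above m \<tau>' u i \<inter> items_above m \<tau>' u i')"
      by (rule card_mono[OF _ sub]) (simp add: items_above_def)
    then have c: "real (card (items_above m \<tau>' u i \<inter> items_above m \<tau>' u i')) > 2 * real r / 3"
      using cb by linarith
    have "card {x\<in>S'. u i' x > \<tau>'} > 0" using cb assms(2) by (cases "card {x\<in>S'. u i' x > \<tau>'}") auto
    then obtain y where y: "y \<in> S'" "u i' y > \<tau>'" 
    proof -
      have "{x\<in>S'. u i' x > \<tau>'} \<noteq> {}" using \<open>card _ > 0\<close> by (metis card.empty less_irrefl)
      then show ?thesis using that by blast
    qed
    have "u i' y \<le> u i' j" using mx fS y(1) by simp
    then have "u i' j > \<tau>'" using y by simp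
    then have "j \<in> items_above m \<tau>' u i \<inter> items_above m \<tau>' u i'"
      using jS S' tt' unfolding S0_def items_above_def by auto
    then show ?thesis using c i'n by auto
  qed
qed

end
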